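(* Let $\alpha>1/3$, $\beta>0$, and let $\widetilde X=\mathcal{M}(\xi)$ with $\xi=(\xi^\pm_k(y))$ independent exponential random variables, $\xi^\pm_k(y)$ of mean $f^\pm(y,k)$. Then for every $y\in\mathbb{Z}$, almost surely, $$\Big\{\sum_{k=0}^{+\infty}e^{2\beta[\widetilde l_{\tau_k}(y)-\alpha\widetilde l_{\tau_k}(y-1)]}<\infty\Big\}\subset\{T_y^-<\infty\}.$$
   Context: Weights: for $y\in\mathbb{Z}$, $n\in\{0,1,2,\dots\}$, $f^\pm(y,n):=\exp\big(2\beta[2(1+\alpha)n-\alpha\mathbf{1}_{\{y\pm1=0\}}+(1+\alpha)\mathbf{1}_{\{\pm y<0\}}]\big)$ and $w(n):=\exp(4\beta\alpha n)$. Time-line construction $\mathcal{M}$: given positive reals $\xi=(\xi^\pm_k(y))_{y\in\mathbb{Z},k\ge0}$, $\widetilde X=\mathcal{M}(\xi)$ is the piecewise-constant right-continuous nearest-neighbour process on $\mathbb{Z}$ with $\widetilde X_0=0$ built as follows. For $t\ge0$ let $\widetilde N_t(y,y\pm1)$ be the number of jumps of $\widetilde X$ from $y$ to $y\pm1$ during $[0,t]$ and $\widetilde Z_t(z)$ the number of jump times $s\le t$ with $\widetilde X_s=z$. While the walker sits at $y$, for each $\epsilon\in\{-1,+1\}$ a clock is attached to the oriented edge $(y,y+\epsilon)$: it measures the total time spent at $y$ since the last time the pair $(\widetilde N_t(y,y+\epsilon),\widetilde Z_t(y+\epsilon))$ changed (or since time $0$), and it rings when this time reaches $\xi^\epsilon_{\widetilde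 N_t(y,y+\epsilon)}(y)/w(\widetilde Z_t(y+\epsilon))$. When one of the two clocks at the current site rings, the walker jumps across the corresponding edge; if both ring simultaneously the walker stays at $y$ forever. Let $\tau_0:=0$ and $\tau_k$ be the time of the $k$-th jump (with $\tau_k=\infty$ if fewer jumps occur). $\widetilde l_t(j)$ denotes the number of crossings of the non-oriented edge $\{j-1,j\}$ by $\widetilde X$ during $[0,t]$. For $y\in\mathbb{Z}$, $T_y^-:=\sum_{k\ge0}\mathbf{1}_{\{\widetilde X_{\tau_k}=y,\ \widetilde X_{\tau_{k+1}}=y-1\}}\dfrac{\xi^-_{\widetilde N_{\tau_k}(y,y-1)}(y)}{w(\widetilde Z_{\tau_k}(y-1))}$. *)

theory Defs
  imports "HOL-Probability.Probability"
begin

definition sg :: "bool \<Rightarrow> int" where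
  "sg b = (if b then 1 else -1)"

definition fw :: "real \<Rightarrow> real \<Rightarrow> bool \<Rightarrow> int \<Rightarrow> nat \<Rightarrow> real" where
  "fw \<alpha> \<beta> b y n = exp (2 * \<beta> * (2 * (1 + \<alpha>) * real n
      - \<alpha> * (if y + sg b = 0 then 1 else 0)
      + (1 + \<alpha>) * (if sg b * y < 0 then 1 else 0)))"

definition ww :: "real \<Rightarrow> real \<Rightarrow> nat \<Rightarrow> real" where
  "ww \<alpha> \<beta> n = exp (4 * \<beta> * \<alpha> * real n)"

text \<open>State of the time-line construction right after a jump time tau_k:
  current position, oriented edge crossing numbers N x z (jumps from x to z),
  arrival counts Z, clocks C x e (time spent at x since the last change of
  the pair (N(x,x+e), Z(x+e))), the jump time, and whether the walker is
  stuck forever (both clocks rang simultaneously).\<close>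
record jstate =
  pos :: int
  Ncr :: "int \<Rightarrow> int \<Rightarrow> nat"
  Zar :: "int \<Rightarrow> nat"
  clk :: "int \<Rightarrow> bool \<Rightarrow> real"
  jtime :: ereal
  stuck :: bool

definition init_state :: jstate where
  "init_state = \<lparr>pos = 0, Ncr = (\<lambda>_ _. 0), Zar = (\<lambda>_. 0), clk = (\<lambda>_ _. 0),
                  jtime = 0, stuck = False\<rparr>"

definition thr :: "(bool \<Rightarrow> nat \<Rightarrow> int \<Rightarrow> real) \<Rightarrow> (nat \<Rightarrow> real) \<Rightarrow> jstate \<Rightarrow> bool \<Rightarrow> real" where
  "thr \<xi> w s e = \<xi> e (Ncr s (pos s) (pos s + sg e)) (pos s) / w (Zar s (pos s + sg e))"

definition remt :: "(bool \<Rightarrow> nat \<Rightarrow> int \<Rightarrow> real) \<Rightarrow> (nat \<Rightarrow> real) \<Rightarrow> jstate \<Rightarrow> bool \<Rightarrow> real" where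
  "remt \<xi> w s e = thr \<xi> w s e - clk s (pos s) e"

text \<open>One step of the jump chain: from the state at tau_k to the state at tau_(k+1).
  If both clocks ring simultaneously, the walker stays forever (tau_(k+1) = infinity,
  position and counts unchanged).\<close>
definition step :: "(bool \<Rightarrow> nat \<Rightarrow> int \<Rightarrow> real) \<Rightarrow> (nat \<Rightarrow> real) \<Rightarrow> jstate \<Rightarrow> jstate" where
  "step \<xi> w s =
    (if stuck s then s
     else if remt \<xi> w s True = remt \<xi> w s False then s\<lparr>jtime := \<infinity>, stuck := True\<rparr>
     else (let y = pos s; e = (remt \<xi> w s True < remt \<xi> w s False);
               dt = min (remt \<xi> w s True) (remt \<xi> w s False); y' = y + sg e in
       \<lparr>pos = y',
        Ncr = (Ncr s)(y := (Ncr s y)(y' := Ncr s y y' + 1)),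
        Zar = (Zar s)(y' := Zar s y' + 1),
        clk = (\<lambda>x d. if x + sg d = y' then 0
                      else if x = y then clk s x d + dt else clk s x d),
        jtime = jtime s + ereal dt,
        stuck = False\<rparr>))"

text \<open>State of the process Xtilde = M(xi) at the k-th jump time tau_k.\<close>
definition jchain :: "(bool \<Rightarrow> nat \<Rightarrow> int \<Rightarrow> real) \<Rightarrow> (nat \<Rightarrow> real) \<Rightarrow> nat \<Rightarrow> jstate" where
  "jchain \<xi> w k = (step \<xi> w ^^ k) init_state"

definition ltime :: "jstate \<Rightarrow> int \<Rightarrow> nat" where
  "ltime s j = Ncr s (j - 1) j + Ncr s j (j - 1)"

definition Tminus :: "(bool \<Rightarrow> nat \<Rightarrow> int \<Rightarrow> real) \<Rightarrow> (nat \<Rightarrow> real) \<Rightarrow> int \<Rightarrow> ennreal" where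
  "Tminus \<xi> w y = (\<Sum>k. (if pos (jchain \<xi> w k) = y \<and> pos (jchain \<xi> w (Suc k)) = y - 1
       then ennreal (\<xi> False (Ncr (jchain \<xi> w k) y (y - 1)) y / w (Zar (jchain \<xi> w k) (y - 1)))
       else 0))"

end

theory Submission
  imports Defs
begin



lemma jchain_0[simp]: "jchain \<Xi> w 0 = init_state" by (simp add: jchain_def)
lemma jchain_Suc: "jchain \<Xi> w (Suc k) = step \<Xi> w (jchain \<Xi> w k)" by (simp add: jchain_def)

lemma sg_simps[simp]: "sg True = 1" "sg False = -1" by (simp_all add: sg_def)

lemma step_pos: "pos (step \<Xi> w s) = (if stuck s \<or> remt \<Xi> w s True = remt \<Xi> w s False then pos s
   else pos s + sg (remt \<Xi> w s True < remt \<Xi> w s False))"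
  by (simp add: step_def Let_def)
lemma step_Ncr: "Ncr (step \<Xi> w s) a b = (if stuck s \<or> remt \<Xi> w s True = remt \<Xi> w s False then Ncr s a b
   else if a = pos s \<and> b = pos s + sg (remt \<Xi> w s True < remt \<Xi> w s False) then Ncr s a b + 1 else Ncr s a b)"
  by (simp add: step_def Let_def)
lemma step_Zar: "Zar (step \<Xi> w s) a = (if stuck s \<or> remt \<Xi> w s True = remt \<Xi> w s False then Zar s a
   else if a = pos s + sg (remt \<Xi> w s True < remt \<Xi> w s False) then Zar s a + 1 else Zar s a)"
  by (simp add: step_def Let_def)
lemma step_clk: "clk (step \<Xi> w s) x d = (if stuck s \<or> remt \<Xi> w s True = remt \<Xi> w s False then clk s x d
   else if x + sg d = pos s + sg (remt \<Xi> w s True < remt \<Xi> w s False) then 0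
   else if x = pos s then clk s x d + min (remt \<Xi> w s True) (remt \<Xi> w s False) else clk s x d)"
  by (simp add: step_def Let_def)
lemma step_stuck: "stuck (step \<Xi> w s) = (stuck s \<or> remt \<Xi> w s True = remt \<Xi> w s False)"
  by (simp add: step_def Let_def)

lemma step_cong:
  assumes "\<And>e. \<Xi> e (Ncr s (pos s) (pos s + sg e)) (pos s) = \<Xi>' e (Ncr s (pos s) (pos s + sg e)) (pos s)"
  shows "step \<Xi> w s = step \<Xi>' w s"
proof -
  have "remt \<Xi> w s e = remt \<Xi>' w s e" for e using assms[of e] by (simp add: remt_def thr_def)
  then show ?thesis by (simp add: step_def)
qed

lemma step_cases:
  "(pos (step \<Xi> w s) = pos s \<and> Ncr (step \<Xi> w s) = Ncr s \<and> Zar (step \<Xi> w s) = Zar s) \<or>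
   (\<exists>e. pos (step \<Xi> w s) = pos s + sg e \<and>
      Ncr (step \<Xi> w s) = (Ncr s)(pos s := (Ncr s (pos s))(pos s + sg e := Ncr s (pos s) (pos s + sg e) + 1)) \<and>
      Zar (step \<Xi> w s) = (Zar s)(pos s + sg e := Zar s (pos s + sg e) + 1))"
  by (auto simp: step_def Let_def)

context fixes \<Xi> :: "bool \<Rightarrow> nat \<Rightarrow> int \<Rightarrow> real" and w :: "nat \<Rightarrow> real" begin

abbreviation "c \<equiv> jchain \<Xi> w"

lemma Ncr_Suc_mono: "Ncr (c k) a b \<le> Ncr (c (Suc k)) a b"
  using step_cases[of \<Xi> w "c k"] by (auto simp: jchain_Suc)

lemma Ncr_mono: "k \<le> k' \<Longrightarrow> Ncr (c k) a b \<le> Ncr (c k') a b"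
  by (induction k' rule: dec_induct) (auto intro: le_trans Ncr_Suc_mono)

lemma Ncr_change: "Ncr (c (Suc k)) a b \<noteq> Ncr (c k) a b \<Longrightarrow>
   pos (c k) = a \<and> pos (c (Suc k)) = b \<and> Ncr (c (Suc k)) a b = Ncr (c k) a b + 1"
  using step_cases[of \<Xi> w "c k"] by (auto simp: jchain_Suc split: if_splits)

lemma Zar_change: "Zar (c (Suc k)) a \<noteq> Zar (c k) a \<Longrightarrow> pos (c (Suc k)) = a"
  using step_cases[of \<Xi> w "c k"] by (auto simp: jchain_Suc split: if_splits)

lemma pos_move: "pos (c (Suc k)) = pos (c k) \<or>
   (pos (c (Suc k)) = pos (c k) + 1 \<or> pos (c (Suc k)) = pos (c k) - 1) \<and>
    Ncr (c (Suc k)) (pos (c k)) (pos (c (Suc k))) = Ncr (c k) (pos (c k)) (pos (c (Suc k))) + 1"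
proof -
  from step_cases[of \<Xi> w "c k"] show ?thesis
  proof
    assume "\<exists>e. pos (step \<Xi> w (c k)) = pos (c k) + sg e \<and>
      Ncr (step \<Xi> w (c k)) = (Ncr (c k))(pos (c k) := (Ncr (c k) (pos (c k)))(pos (c k) + sg e := Ncr (c k) (pos (c k)) (pos (c k) + sg e) + 1)) \<and>
      Zar (step \<Xi> w (c k)) = (Zar (c k))(pos (c k) + sg e := Zar (c k) (pos (c k) + sg e) + 1)"
    then obtain e where "pos (step \<Xi> w (c k)) = pos (c k) + sg e"
      "Ncr (step \<Xi> w (c k)) = (Ncr (c k))(pos (c k) := (Ncr (c k) (pos (c k)))(pos (c k) + sg e := Ncr (c k) (pos (c k)) (pos (c k) + sg e) + 1))"
      by blast
    then show ?thesis by (cases e) (auto simp: jchain_Suc)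
  qed (auto simp: jchain_Suc)
qed

lemma Zar_inv: "Zar (c k) x = Ncr (c k) (x - 1) x + Ncr (c k) (x + 1) x"
proof (induction k arbitrary: x)
  case 0 then show ?case by (simp add: init_state_def)
next
  case (Suc k)
  from step_cases[of \<Xi> w "c k"] show ?case
  proof
    assume "\<exists>e. pos (step \<Xi> w (c k)) = pos (c k) + sg e \<and>
      Ncr (step \<Xi> w (c k)) = (Ncr (c k))(pos (c k) := (Ncr (c k) (pos (c k)))(pos (c k) + sg e := Ncr (c k) (pos (c k)) (pos (c k) + sg e) + 1)) \<and>
      Zar (step \<Xi> w (c k)) = (Zar (c k))(pos (c k) + sg e := Zar (c k) (pos (c k) + sg e) + 1)"
    then obtain e where "Ncr (step \<Xi> w (c k)) = (Ncr (c k))(pos (c k) := (Ncr (c k) (pos (c k)))(pos (c k) + sg e := Ncr (c k) (pos (c k)) (pos (c k) + sg e) + 1))"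
      "Zar (step \<Xi> w (c k)) = (Zar (c k))(pos (c k) + sg e := Zar (c k) (pos (c k) + sg e) + 1)"
      by blast
    then show ?thesis using Suc.IH[of x] by (cases e) (auto simp: jchain_Suc)
  qed (use Suc.IH in \<open>auto simp: jchain_Suc\<close>)
qed

lemma bal_inv: "int (Ncr (c k) a (a + 1)) - int (Ncr (c k) (a + 1) a) =
   (if pos (c k) > a then 1 else 0) - (if 0 > a then 1 else 0)"
proof (induction k)
  case 0 then show ?case by (simp add: init_state_def)
next
  case (Suc k)
  from step_cases[of \<Xi> w "c k"] show ?case
  proof
    assume "\<exists>e. pos (step \<Xi> w (c k)) = pos (c k) + sg e \<and>
      Ncr (step \<Xi> w (c k)) = (Ncr (c k))(pos (c k) := (Ncr (c k) (pos (c k)))(pos (c k) + sg e := Ncr (c k) (pos (c k)) (pos (c k) + sg e) + 1)) \<and>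
      Zar (step \<Xi> w (c k)) = (Zar (c k))(pos (c k) + sg e := Zar (c k) (pos (c k) + sg e) + 1)"
    then obtain e where "pos (step \<Xi> w (c k)) = pos (c k) + sg e" "Ncr (step \<Xi> w (c k)) = (Ncr (c k))(pos (c k) := (Ncr (c k) (pos (c k)))(pos (c k) + sg e := Ncr (c k) (pos (c k)) (pos (c k) + sg e) + 1))"
      by blast
    then show ?thesis using Suc.IH
      by (cases e; cases "pos (c k) = a"; cases "pos (c k) = a + 1") (auto simp: jchain_Suc)
  qed (use Suc.IH in \<open>auto simp: jchain_Suc\<close>)
qed


lemma N_gt_started: "n < Ncr (c i) y (y-1) \<Longrightarrow> \<exists>j<i. pos (c j) = y \<and> Ncr (c j) y (y-1) = n"
proof (induction i)
  case 0 then show ?case by (simp add: init_state_def)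
next
  case (Suc i)
  show ?case
  proof (cases "n < Ncr (c i) y (y-1)")
    case True then show ?thesis using Suc.IH by (meson less_SucI)
  next
    case False
    then have "Ncr (c (Suc i)) y (y-1) \<noteq> Ncr (c i) y (y-1)" using Suc.prems by linarith
    from Ncr_change[OF this] False Suc.prems show ?thesis by auto
  qed
qed

lemma Zconst: assumes "pos (c K) = y" "Ncr (c K) y (y-1) = n" "K \<le> k"
  shows "Ncr (c k) y (y-1) = n \<longrightarrow> Zar (c k) (y-1) = Zar (c K) (y-1) \<and> pos (c k) \<ge> y"
  using assms(3)
proof (induction k rule: dec_induct)
  case base then show ?case using assms by simp
next
  case (step j)
  show ?case
  proof
    assume A: "Ncr (c (Suc j)) y (y-1) = n"
    have "Ncr (c j) y (y-1) \<le> n" using Ncr_Suc_mono[of j y "y-1"] A by simp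
    moreover have "Ncr (c j) y (y-1) \<ge> n" using Ncr_mono[OF step(1), of y "y-1"] assms(2) by simp
    ultimately have Nj: "Ncr (c j) y (y-1) = n" by simp
    with step(3) have IH: "Zar (c j) (y-1) = Zar (c K) (y-1)" "pos (c j) \<ge> y" by auto
    have P: "pos (c (Suc j)) \<ge> y"
    proof (rule ccontr)
      assume "\<not> ?thesis"
      with pos_move[of j] IH(2) have "pos (c j) = y" "pos (c (Suc j)) = y - 1"
        "Ncr (c (Suc j)) (pos (c j)) (pos (c (Suc j))) = Ncr (c j) (pos (c j)) (pos (c (Suc j))) + 1"
        by auto
      with A Nj show False by simp
    qed
    have "Zar (c (Suc j)) (y-1) = Zar (c j) (y-1)"
      using Zar_change[of j "y-1"] P by fastforce
    with IH P show "Zar (c (Suc j)) (y - 1) = Zar (c K) (y - 1) \<and> y \<le> pos (c (Suc j))" by simp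
  qed
qed

lemma ring_Ncr: "pos (c k) = y \<Longrightarrow> pos (c (Suc k)) = y - 1 \<Longrightarrow> Ncr (c (Suc k)) y (y-1) = Ncr (c k) y (y-1) + 1"
  using pos_move[of k] by auto

lemma ring_inj: assumes "pos (c k) = y" "pos (c (Suc k)) = y - 1" "pos (c k') = y" "pos (c (Suc k')) = y - 1"
   "Ncr (c k) y (y-1) = Ncr (c k') y (y-1)" shows "k = k'"
proof (rule ccontr)
  assume "k \<noteq> k'"
  then consider "k < k'" | "k' < k" by linarith
  then show False
  proof cases
    case 1
    then have "Ncr (c (Suc k)) y (y-1) \<le> Ncr (c k') y (y-1)" by (intro Ncr_mono) simp
    with ring_Ncr[OF assms(1,2)] assms(5) show False by simp
  next
    case 2
    then have "Ncr (c (Suc k')) y (y-1) \<le> Ncr (c k) y (y-1)" by (intro Ncr_mono) simp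
    with ring_Ncr[OF assms(3,4)] assms(5) show False by simp
  qed
qed

lemma fw_bound: assumes "pos (c k) = y"
  shows "fw \<alpha> \<beta> False y (Ncr (c k) y (y-1)) / ww \<alpha> \<beta> (Zar (c k) (y-1)) =
     exp (2 * \<beta> * (real (ltime (c k) y) - \<alpha> * real (ltime (c k) (y - 1))))"
proof -
  have b1: "int (Ncr (c k) (y-1) y) - int (Ncr (c k) y (y-1)) = 1 - (if 0 > y - 1 then 1 else 0)"
    using bal_inv[of k "y-1"] assms by simp
  have b2: "int (Ncr (c k) (y-2) (y-1)) - int (Ncr (c k) (y-1) (y-2)) = 1 - (if 0 > y - 2 then 1 else 0)"
    using bal_inv[of k "y-2"] assms by simp
  have z: "Zar (c k) (y-1) = Ncr (c k) (y-2) (y-1) + Ncr (c k) y (y-1)"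
    using Zar_inv[of k "y-1"] by simp
  have l1: "ltime (c k) y = Ncr (c k) (y-1) y + Ncr (c k) y (y-1)" by (simp add: ltime_def)
  have l2: "ltime (c k) (y-1) = Ncr (c k) (y-2) (y-1) + Ncr (c k) (y-1) (y-2)" by (simp add: ltime_def)
  define n where "n = Ncr (c k) y (y-1)"
  define A where "A = Ncr (c k) (y-1) y"
  define B where "B = Ncr (c k) (y-2) (y-1)"
  define C where "C = Ncr (c k) (y-1) (y-2)"
  have b1': "real A - real n = 1 - (if 0 > y - 1 then 1 else 0)"
    using arg_cong[OF b1, of real_of_int] unfolding A_def n_def by (simp split: if_splits)
  have b2': "real B - real C = 1 - (if 0 > y - 2 then 1 else 0)"
    using arg_cong[OF b2, of real_of_int] unfolding B_def C_def by (simp split: if_splits)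
  have "fw \<alpha> \<beta> False y n / ww \<alpha> \<beta> (B + n) = exp (2 * \<beta> * (2 * (1 + \<alpha>) * real n
      - \<alpha> * (if y - 1 = 0 then 1 else 0)
      + (1 + \<alpha>) * (if - y < 0 then 1 else 0)) - 4 * \<beta> * \<alpha> * real (B + n))"
    by (simp add: fw_def ww_def exp_diff)
  also have "\<dots> = exp (2 * \<beta> * (real (A + n) - \<alpha> * real (B + C)))"
  proof -
    define i1 :: real where "i1 = (if y - 1 = 0 then 1 else 0)"
    define i2 :: real where "i2 = (if - y < 0 then 1 else 0)"
    have s0: "real n - real A - \<alpha> * i1 + (1 + \<alpha>) * i2 - \<alpha> * (real B - real C) = 0"
      unfolding b2' using b1' unfolding i1_def i2_def
      by (cases "y \<ge> 2"; cases "y = 1"; cases "y \<le> 0"; simp; argo)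
    have "2 * \<beta> * (2 * (1 + \<alpha>) * real n - \<alpha> * i1 + (1 + \<alpha>) * i2) - 4 * \<beta> * \<alpha> * real (B + n)
        - 2 * \<beta> * (real (A + n) - \<alpha> * real (B + C))
        = 2 * \<beta> * (real n - real A - \<alpha> * i1 + (1 + \<alpha>) * i2 - \<alpha> * (real B - real C))"
      by (simp add: algebra_simps)
    then show ?thesis using s0 unfolding i1_def i2_def by simp
  qed
  finally show ?thesis using z l1 l2 unfolding n_def A_def B_def C_def by simp
qed

end




lemma suminf_le_reindex:
  fixes t u :: "nat \<Rightarrow> ennreal"
  assumes tu: "\<And>k. t k \<noteq> 0 \<Longrightarrow> t k = u (\<phi> k)" and inj: "inj_on \<phi> {k. t k \<noteq> 0}"
  shows "suminf t \<le> suminf u"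
proof (rule suminf_le_const[OF summableI])
  fix N
  define F where "F = {k. k < N \<and> t k \<noteq> 0}"
  have fF: "finite F" unfolding F_def by simp
  have "sum t {..<N} = sum t F" unfolding F_def by (intro sum.mono_neutral_right) auto
  also have "\<dots> = sum (u \<circ> \<phi>) F" using tu unfolding F_def by (intro sum.cong) auto
  also have "\<dots> = sum u (\<phi> ` F)" using inj by (intro sum.reindex[symmetric]) (auto simp: F_def intro: inj_on_subset)
  also have "\<dots> \<le> suminf u" by (intro sum_le_suminf) (auto simp: fF)
  finally show "sum t {..<N} \<le> suminf u" .
qed

definition blk :: "(bool \<Rightarrow> nat \<Rightarrow> int \<Rightarrow> real) \<Rightarrow> (nat \<Rightarrow> real) \<Rightarrow> int \<Rightarrow> nat \<Rightarrow> nat \<Rightarrow> bool" where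
  "blk \<Xi> w y n k \<longleftrightarrow> pos (jchain \<Xi> w k) = y \<and> Ncr (jchain \<Xi> w k) y (y-1) = n"

definition Kn :: "(bool \<Rightarrow> nat \<Rightarrow> int \<Rightarrow> real) \<Rightarrow> (nat \<Rightarrow> real) \<Rightarrow> int \<Rightarrow> nat \<Rightarrow> nat" where
  "Kn \<Xi> w y n = (LEAST k. blk \<Xi> w y n k)"

definition aa :: "real \<Rightarrow> real \<Rightarrow> (bool \<Rightarrow> nat \<Rightarrow> int \<Rightarrow> real) \<Rightarrow> int \<Rightarrow> nat \<Rightarrow> real" where
  "aa \<alpha> \<beta> \<Xi> y k = exp (2 * \<beta> * (real (ltime (jchain \<Xi> (ww \<alpha> \<beta>) k) y)
               - \<alpha> * real (ltime (jchain \<Xi> (ww \<alpha> \<beta>) k) (y - 1))))"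

definition GG :: "real \<Rightarrow> real \<Rightarrow> (bool \<Rightarrow> nat \<Rightarrow> int \<Rightarrow> real) \<Rightarrow> int \<Rightarrow> real \<Rightarrow> nat \<Rightarrow> real" where
  "GG \<alpha> \<beta> \<Xi> y Mb n = (if (\<exists>k. blk \<Xi> (ww \<alpha> \<beta>) y n k) \<and> (\<Sum>k\<le>Kn \<Xi> (ww \<alpha> \<beta>) y n. aa \<alpha> \<beta> \<Xi> y k) \<le> Mb
     then fw \<alpha> \<beta> False y n / ww \<alpha> \<beta> (Zar (jchain \<Xi> (ww \<alpha> \<beta>) (Kn \<Xi> (ww \<alpha> \<beta>) y n)) (y-1)) else 0)"

lemma chain_agree:
  assumes ag: "\<And>b m z. \<not> (b = False \<and> z = y \<and> n \<le> m) \<Longrightarrow> \<Xi> b m z = \<Xi>' b m z"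
    and "\<forall>i<j. pos (jchain \<Xi> w i) = y \<longrightarrow> Ncr (jchain \<Xi> w i) y (y-1) < n"
  shows "jchain \<Xi> w j = jchain \<Xi>' w j"
  using assms(2)
proof (induction j)
  case 0 then show ?case by simp
next
  case (Suc j)
  then have IH: "jchain \<Xi> w j = jchain \<Xi>' w j" by simp
  have "step \<Xi> w (jchain \<Xi> w j) = step \<Xi>' w (jchain \<Xi> w j)"
  proof (rule step_cong)
    fix e
    show "\<Xi> e (Ncr (jchain \<Xi> w j) (pos (jchain \<Xi> w j)) (pos (jchain \<Xi> w j) + sg e)) (pos (jchain \<Xi> w j)) =
          \<Xi>' e (Ncr (jchain \<Xi> w j) (pos (jchain \<Xi> w j)) (pos (jchain \<Xi> w j) + sg e)) (pos (jchain \<Xi> w j))"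
      using Suc.prems by (intro ag) (cases e; auto)
  qed
  then show ?case using IH by (simp add: jchain_Suc)
qed

lemma GG_agree:
  assumes ag: "\<And>b m z. \<not> (b = False \<and> z = y \<and> n \<le> m) \<Longrightarrow> \<Xi> b m z = \<Xi>' b m z"
  shows "GG \<alpha> \<beta> \<Xi> y Mb n = GG \<alpha> \<beta> \<Xi>' y Mb n"
proof (cases "\<exists>k. blk \<Xi> (ww \<alpha> \<beta>) y n k")
  case True
  define w where "w = ww \<alpha> \<beta>"
  define K where "K = Kn \<Xi> w y n"
  have bK: "blk \<Xi> w y n K" using True unfolding K_def Kn_def w_def by (meson LeastI)
  have nb: "\<not> blk \<Xi> w y n i" if "i < K" for i using that unfolding K_def Kn_def by (rule not_less_Least)
  have lt: "\<forall>i<j. pos (jchain \<Xi> w i) = y \<longrightarrow> Ncr (jchain \<Xi> w i) y (y-1) < n" if "j \<le> K" for j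
  proof (intro allI impI)
    fix i assume "i < j" "pos (jchain \<Xi> w i) = y"
    moreover have "Ncr (jchain \<Xi> w i) y (y-1) \<le> Ncr (jchain \<Xi> w K) y (y-1)"
      using that \<open>i < j\<close> by (intro Ncr_mono) simp
    ultimately show "Ncr (jchain \<Xi> w i) y (y-1) < n" using bK nb[of i] that unfolding blk_def
      by (metis le_neq_implies_less order_less_le_trans)
  qed
  have eq: "jchain \<Xi> w j = jchain \<Xi>' w j" if "j \<le> K" for j
    by (rule chain_agree[OF ag lt[OF that]])
  have bK': "blk \<Xi>' w y n K" using bK eq[of K] by (simp add: blk_def)
  have nb': "\<not> blk \<Xi>' w y n i" if "i < K" for i using nb[OF that] eq[of i] that by (simp add: blk_def)
  have K': "Kn \<Xi>' w y n = K" unfolding Kn_def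
  proof (rule Least_equality)
    show "blk \<Xi>' w y n K" by (rule bK')
  next
    fix i assume "blk \<Xi>' w y n i" then show "K \<le> i" using nb' not_le by blast
  qed
  have S: "(\<Sum>k\<le>K. aa \<alpha> \<beta> \<Xi> y k) = (\<Sum>k\<le>K. aa \<alpha> \<beta> \<Xi>' y k)"
    by (intro sum.cong) (auto simp: aa_def eq[folded w_def] w_def[symmetric])
  show ?thesis unfolding GG_def using True bK' K' S eq[of K] by (auto simp: w_def[symmetric] K_def[symmetric])
next
  case False
  define w where "w = ww \<alpha> \<beta>"
  have lt: "\<forall>i<j. pos (jchain \<Xi> w i) = y \<longrightarrow> Ncr (jchain \<Xi> w i) y (y-1) < n" for j
  proof (intro allI impI)
    fix i assume "i < j" "pos (jchain \<Xi> w i) = y"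
    then show "Ncr (jchain \<Xi> w i) y (y-1) < n" using False N_gt_started[of n \<Xi> w i y]
      unfolding blk_def w_def by (metis linorder_neqE_nat)
  qed
  have eq: "jchain \<Xi> w j = jchain \<Xi>' w j" for j
    by (rule chain_agree[OF ag lt])
  have "\<not> (\<exists>k. blk \<Xi>' (ww \<alpha> \<beta>) y n k)" using False eq by (simp add: blk_def w_def)
  then have "GG \<alpha> \<beta> \<Xi>' y Mb n = 0" unfolding GG_def by (intro if_not_P) blast
  moreover have "GG \<alpha> \<beta> \<Xi> y Mb n = 0" using False unfolding GG_def by (intro if_not_P) blast
  ultimately show ?thesis by simp
qed

lemma aa_nonneg: "0 \<le> aa \<alpha> \<beta> \<Xi> y k" by (simp add: aa_def)

lemma GG_nonneg: "0 \<le> GG \<alpha> \<beta> \<Xi> y Mb n"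
  by (simp add: GG_def fw_def ww_def)

lemma GG_active: assumes "GG \<alpha> \<beta> \<Xi> y Mb n \<noteq> 0"
  shows "blk \<Xi> (ww \<alpha> \<beta>) y n (Kn \<Xi> (ww \<alpha> \<beta>) y n)"
    "(\<Sum>k\<le>Kn \<Xi> (ww \<alpha> \<beta>) y n. aa \<alpha> \<beta> \<Xi> y k) \<le> Mb"
    "GG \<alpha> \<beta> \<Xi> y Mb n = aa \<alpha> \<beta> \<Xi> y (Kn \<Xi> (ww \<alpha> \<beta>) y n)"
proof -
  have ex: "\<exists>k. blk \<Xi> (ww \<alpha> \<beta>) y n k" and le: "(\<Sum>k\<le>Kn \<Xi> (ww \<alpha> \<beta>) y n. aa \<alpha> \<beta> \<Xi> y k) \<le> Mb"
    using assms by (auto simp: GG_def split: if_splits)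
  show b: "blk \<Xi> (ww \<alpha> \<beta>) y n (Kn \<Xi> (ww \<alpha> \<beta>) y n)" using ex unfolding Kn_def by (meson LeastI)
  show "(\<Sum>k\<le>Kn \<Xi> (ww \<alpha> \<beta>) y n. aa \<alpha> \<beta> \<Xi> y k) \<le> Mb" by fact
  show "GG \<alpha> \<beta> \<Xi> y Mb n = aa \<alpha> \<beta> \<Xi> y (Kn \<Xi> (ww \<alpha> \<beta>) y n)"
    using ex le b fw_bound[of \<Xi> "ww \<alpha> \<beta>" "Kn \<Xi> (ww \<alpha> \<beta>) y n" y \<alpha> \<beta>]
    unfolding GG_def blk_def aa_def by simp
qed

lemma GG_sum_le: "(\<Sum>n. ennreal (GG \<alpha> \<beta> \<Xi> y Mb n)) \<le> ennreal Mb"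
proof (rule suminf_le_const[OF summableI])
  fix N
  define K where "K = Kn \<Xi> (ww \<alpha> \<beta>) y"
  define F where "F = {n. n < N \<and> GG \<alpha> \<beta> \<Xi> y Mb n \<noteq> 0}"
  have fF: "finite F" unfolding F_def by simp
  have inj: "inj_on K F"
  proof
    fix n m assume nm: "n \<in> F" "m \<in> F" "K n = K m"
    have "Ncr (jchain \<Xi> (ww \<alpha> \<beta>) (K n)) y (y-1) = n"
      using GG_active(1)[of \<alpha> \<beta> \<Xi> y Mb n] nm(1) unfolding F_def K_def blk_def by simp
    moreover have "Ncr (jchain \<Xi> (ww \<alpha> \<beta>) (K m)) y (y-1) = m"
      using GG_active(1)[of \<alpha> \<beta> \<Xi> y Mb m] nm(2) unfolding F_def K_def blk_def by simp
    ultimately show "n = m" by (metis nm(3))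
  qed
  show "(\<Sum>n<N. ennreal (GG \<alpha> \<beta> \<Xi> y Mb n)) \<le> ennreal Mb"
  proof (cases "F = {}")
    case True
    then have "(\<Sum>n<N. GG \<alpha> \<beta> \<Xi> y Mb n) = 0" unfolding F_def by (intro sum.neutral) auto
    then show ?thesis by (simp add: GG_nonneg)
  next
    case False
    have "Max (K ` F) \<in> K ` F" by (rule Max_in) (use fF False in auto)
    then obtain n0 where n0a: "n0 \<in> F" "K n0 = Max (K ` F)" by auto
    have n0: "n0 \<in> F" "\<forall>n\<in>F. K n \<le> K n0"
      using n0a Max_ge[OF finite_imageI[OF fF], of "K _" K] by auto
    have "(\<Sum>n<N. GG \<alpha> \<beta> \<Xi> y Mb n) = (\<Sum>n\<in>F. GG \<alpha> \<beta> \<Xi> y Mb n)"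
      unfolding F_def by (intro sum.mono_neutral_right) auto
    also have "\<dots> = (\<Sum>n\<in>F. aa \<alpha> \<beta> \<Xi> y (K n))"
      by (intro sum.cong) (auto simp: F_def K_def intro: GG_active(3))
    also have "\<dots> = (\<Sum>k\<in>K ` F. aa \<alpha> \<beta> \<Xi> y k)" by (simp add: sum.reindex[OF inj])
    also have "\<dots> \<le> (\<Sum>k\<le>K n0. aa \<alpha> \<beta> \<Xi> y k)"
      using n0 by (intro sum_mono2) (auto simp: aa_nonneg)
    also have "\<dots> \<le> Mb" using GG_active(2)[of \<alpha> \<beta> \<Xi> y Mb n0] n0(1) unfolding F_def K_def by simp
    finally show ?thesis by (simp add: GG_nonneg ennreal_leI)
  qed
qed

lemma fw_pos: "0 < fw \<alpha> \<beta> b y n" by (simp add: fw_def)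
lemma ww_pos: "0 < ww \<alpha> \<beta> n" by (simp add: ww_def)

lemma Tminus_le:
  assumes A: "(\<Sum>k. ennreal (aa \<alpha> \<beta> \<Xi> y k)) \<le> ennreal Mb" and Mb: "0 \<le> Mb"
  shows "Tminus \<Xi> (ww \<alpha> \<beta>) y \<le> (\<Sum>n. ennreal (\<Xi> False n y) * (ennreal (1 / fw \<alpha> \<beta> False y n) * ennreal (GG \<alpha> \<beta> \<Xi> y Mb n)))"
  unfolding Tminus_def
proof (rule suminf_le_reindex[where \<phi> = "\<lambda>k. Ncr (jchain \<Xi> (ww \<alpha> \<beta>) k) y (y-1)"])
  define w where "w = ww \<alpha> \<beta>"
  let ?t = "\<lambda>k. if pos (jchain \<Xi> (ww \<alpha> \<beta>) k) = y \<and> pos (jchain \<Xi> (ww \<alpha> \<beta>) (Suc k)) = y - 1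
       then ennreal (\<Xi> False (Ncr (jchain \<Xi> (ww \<alpha> \<beta>) k) y (y - 1)) y / ww \<alpha> \<beta> (Zar (jchain \<Xi> (ww \<alpha> \<beta>) k) (y - 1)))
       else 0"
  show "inj_on (\<lambda>k. Ncr (jchain \<Xi> (ww \<alpha> \<beta>) k) y (y-1)) {k. ?t k \<noteq> 0}"
  proof
    fix k k' assume "k \<in> {k. ?t k \<noteq> 0}" "k' \<in> {k. ?t k \<noteq> 0}"
      "Ncr (jchain \<Xi> (ww \<alpha> \<beta>) k) y (y-1) = Ncr (jchain \<Xi> (ww \<alpha> \<beta>) k') y (y-1)"
    then show "k = k'" by (intro ring_inj[of \<Xi> "ww \<alpha> \<beta>" k y k']) (auto split: if_splits)
  qed
  fix k assume tk: "?t k \<noteq> 0"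
  then have r: "pos (jchain \<Xi> w k) = y" "pos (jchain \<Xi> w (Suc k)) = y - 1"
    by (auto simp: w_def split: if_splits)
  define n where "n = Ncr (jchain \<Xi> w k) y (y-1)"
  have bk: "blk \<Xi> w y n k" using r by (simp add: blk_def n_def)
  define K where "K = Kn \<Xi> w y n"
  have bK: "blk \<Xi> w y n K" using bk unfolding K_def Kn_def by (rule LeastI)
  have Kk: "K \<le> k" using bk unfolding K_def Kn_def by (rule Least_le)
  have Z: "Zar (jchain \<Xi> w k) (y-1) = Zar (jchain \<Xi> w K) (y-1)"
    using Zconst[of \<Xi> w K y n k] bK Kk by (simp add: blk_def n_def)
  have "ennreal (\<Sum>k'\<le>K. aa \<alpha> \<beta> \<Xi> y k') = (\<Sum>k'\<le>K. ennreal (aa \<alpha> \<beta> \<Xi> y k'))"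
    by (simp add: aa_nonneg)
  also have "\<dots> \<le> (\<Sum>k. ennreal (aa \<alpha> \<beta> \<Xi> y k))" by (intro sum_le_suminf) auto
  also have "\<dots> \<le> ennreal Mb" by (rule A)
  finally have P: "(\<Sum>k'\<le>K. aa \<alpha> \<beta> \<Xi> y k') \<le> Mb" using Mb by (simp add: ennreal_le_iff)
  have G: "GG \<alpha> \<beta> \<Xi> y Mb n = fw \<alpha> \<beta> False y n / ww \<alpha> \<beta> (Zar (jchain \<Xi> w k) (y-1))"
    using bk P Z unfolding GG_def w_def[symmetric] K_def[symmetric] by auto
  have fp: "0 < fw \<alpha> \<beta> False y n" by (rule fw_pos)
  have wp: "0 < ww \<alpha> \<beta> (Zar (jchain \<Xi> w k) (y-1))" by (rule ww_pos)
  have "ennreal (1 / fw \<alpha> \<beta> False y n) * ennreal (GG \<alpha> \<beta> \<Xi> y Mb n) = ennreal (1 / ww \<alpha> \<beta> (Zar (jchain \<Xi> w k) (y-1)))"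
    using fp wp by (simp add: G ennreal_mult[symmetric] del: ennreal_mult)
  then show "?t k = ennreal (\<Xi> False (Ncr (jchain \<Xi> (ww \<alpha> \<beta>) k) y (y-1)) y) *
     (ennreal (1 / fw \<alpha> \<beta> False y (Ncr (jchain \<Xi> (ww \<alpha> \<beta>) k) y (y-1))) *
      ennreal (GG \<alpha> \<beta> \<Xi> y Mb (Ncr (jchain \<Xi> (ww \<alpha> \<beta>) k) y (y-1))))"
    using r wp by (simp add: w_def[symmetric] n_def[symmetric] ennreal_mult''[symmetric] divide_inverse)
qed




lemma step_pos': "pos (step \<Xi> w s) = (if stuck s \<or> remt \<Xi> w s True = remt \<Xi> w s False then pos s
   else if remt \<Xi> w s True < remt \<Xi> w s False then pos s + 1 else pos s - 1)"
  by (simp add: step_pos)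

lemma step_Ncr': "Ncr (step \<Xi> w s) a b = (if stuck s \<or> remt \<Xi> w s True = remt \<Xi> w s False then Ncr s a b
   else if a = pos s \<and> b = pos (step \<Xi> w s) then Ncr s a b + 1 else Ncr s a b)"
  by (simp add: step_Ncr step_pos)

lemma step_Zar': "Zar (step \<Xi> w s) a = (if stuck s \<or> remt \<Xi> w s True = remt \<Xi> w s False then Zar s a
   else if a = pos (step \<Xi> w s) then Zar s a + 1 else Zar s a)"
  by (simp add: step_Zar step_pos)

lemma step_clk': "clk (step \<Xi> w s) x d = (if stuck s \<or> remt \<Xi> w s True = remt \<Xi> w s False then clk s x d
   else if x + sg d = pos (step \<Xi> w s) then 0
   else if x = pos s then clk s x d + min (remt \<Xi> w s True) (remt \<Xi> w s False) else clk s x d)"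
  by (simp add: step_clk step_pos)

lemma jchain_meas:
  fixes X :: "bool \<times> nat \<times> int \<Rightarrow> 'b \<Rightarrow> real" and N :: "'b measure"
  assumes X: "\<And>i. X i \<in> borel_measurable N"
  shows "(\<lambda>\<omega>. pos (jchain (\<lambda>b k z. X (b,k,z) \<omega>) w k)) \<in> measurable N (count_space UNIV) \<and>
     (\<forall>a b. (\<lambda>\<omega>. Ncr (jchain (\<lambda>b k z. X (b,k,z) \<omega>) w k) a b) \<in> measurable N (count_space UNIV)) \<and>
     (\<forall>a. (\<lambda>\<omega>. Zar (jchain (\<lambda>b k z. X (b,k,z) \<omega>) w k) a) \<in> measurable N (count_space UNIV)) \<and>
     (\<forall>a d. (\<lambda>\<omega>. clk (jchain (\<lambda>b k z. X (b,k,z) \<omega>) w k) a d) \<in> borel_measurable N) \<and>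
     (\<lambda>\<omega>. stuck (jchain (\<lambda>b k z. X (b,k,z) \<omega>) w k)) \<in> measurable N (count_space UNIV)"
proof (induction k)
  case 0 then show ?case by (simp add: init_state_def)
next
  case (Suc k)
  define S where "S \<omega> = jchain (\<lambda>b k z. X (b,k,z) \<omega>) w k" for \<omega>
  define Xi where "Xi \<omega> = (\<lambda>b k z. X (b,k,z) \<omega>)" for \<omega>
  have P[measurable]: "(\<lambda>\<omega>. pos (S \<omega>)) \<in> measurable N (count_space UNIV)"
    and Nc[measurable]: "\<And>a b. (\<lambda>\<omega>. Ncr (S \<omega>) a b) \<in> measurable N (count_space UNIV)"
    and Z[measurable]: "\<And>a. (\<lambda>\<omega>. Zar (S \<omega>) a) \<in> measurable N (count_space UNIV)"
    and C[measurable]: "\<And>a d. (\<lambda>\<omega>. clk (S \<omega>) a d) \<in> borel_measurable N"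
    and St[measurable]: "(\<lambda>\<omega>. stuck (S \<omega>)) \<in> measurable N (count_space UNIV)"
    using Suc.IH unfolding S_def by auto
  have R[measurable]: "(\<lambda>\<omega>. remt (Xi \<omega>) w (S \<omega>) e) \<in> borel_measurable N" for e
  proof -
    have "(\<lambda>\<omega>. (\<lambda>p \<omega>. X (e, Ncr (S \<omega>) p (p + sg e), p) \<omega> / w (Zar (S \<omega>) (p + sg e)) - clk (S \<omega>) p e) (pos (S \<omega>)) \<omega>)
         \<in> borel_measurable N"
    proof (rule measurable_compose_countable[OF _ P])
      fix p :: int
      have a: "(\<lambda>\<omega>. (\<lambda>m \<omega>. X (e, m, p) \<omega>) (Ncr (S \<omega>) p (p + sg e)) \<omega>) \<in> borel_measurable N"
        by (rule measurable_compose_countable[OF _ Nc]) (rule X)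
      have b: "(\<lambda>\<omega>. w (Zar (S \<omega>) (p + sg e))) \<in> borel_measurable N"
        using measurable_compose[OF Z measurable_count_space] by (simp add: comp_def)
      show "(\<lambda>\<omega>. X (e, Ncr (S \<omega>) p (p + sg e), p) \<omega> / w (Zar (S \<omega>) (p + sg e)) - clk (S \<omega>) p e) \<in> borel_measurable N"
        using a b by measurable
    qed
    then show ?thesis by (simp add: remt_def thr_def Xi_def)
  qed
  have Pn[measurable]: "(\<lambda>\<omega>. pos (step (Xi \<omega>) w (S \<omega>))) \<in> measurable N (count_space UNIV)"
    unfolding step_pos' by measurable
  have "(\<lambda>\<omega>. Ncr (step (Xi \<omega>) w (S \<omega>)) a b) \<in> measurable N (count_space UNIV)" for a b
    unfolding step_Ncr' by measurable
  moreover have "(\<lambda>\<omega>. Zar (step (Xi \<omega>) w (S \<omega>)) a) \<in> measurable N (count_space UNIV)" for a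
    unfolding step_Zar' by measurable
  moreover have "(\<lambda>\<omega>. clk (step (Xi \<omega>) w (S \<omega>)) a d) \<in> borel_measurable N" for a d
    unfolding step_clk' by measurable
  moreover have "(\<lambda>\<omega>. stuck (step (Xi \<omega>) w (S \<omega>))) \<in> measurable N (count_space UNIV)"
    unfolding step_stuck by measurable
  ultimately show ?case using Pn unfolding S_def Xi_def by (simp add: jchain_Suc)
qed

lemma GG_meas:
  fixes X :: "bool \<times> nat \<times> int \<Rightarrow> 'b \<Rightarrow> real" and N :: "'b measure"
  assumes X: "\<And>i. X i \<in> borel_measurable N"
  shows "(\<lambda>\<omega>. GG \<alpha> \<beta> (\<lambda>b k z. X (b,k,z) \<omega>) y Mb n) \<in> borel_measurable N"
proof -
  define S where "S \<omega> k = jchain (\<lambda>b k z. X (b,k,z) \<omega>) (ww \<alpha> \<beta>) k" for \<omega> k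
  note JM = jchain_meas[where X=X and w="ww \<alpha> \<beta>", OF X, folded S_def]
  have P[measurable]: "\<And>k. (\<lambda>\<omega>. pos (S \<omega> k)) \<in> measurable N (count_space UNIV)"
    and Nc[measurable]: "\<And>k a b. (\<lambda>\<omega>. Ncr (S \<omega> k) a b) \<in> measurable N (count_space UNIV)"
    and Z[measurable]: "\<And>k a. (\<lambda>\<omega>. Zar (S \<omega> k) a) \<in> measurable N (count_space UNIV)"
    using JM by auto
  have B[measurable]: "(\<lambda>\<omega>. blk (\<lambda>b k z. X (b,k,z) \<omega>) (ww \<alpha> \<beta>) y n k) \<in> measurable N (count_space UNIV)" for k
    unfolding blk_def S_def[symmetric] by measurable
  have K[measurable]: "(\<lambda>\<omega>. Kn (\<lambda>b k z. X (b,k,z) \<omega>) (ww \<alpha> \<beta>) y n) \<in> measurable N (count_space UNIV)"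
    unfolding Kn_def by measurable
  have A[measurable]: "(\<lambda>\<omega>. aa \<alpha> \<beta> (\<lambda>b k z. X (b,k,z) \<omega>) y k) \<in> borel_measurable N" for k
  proof -
    have RN[measurable]: "(\<lambda>\<omega>. real (Ncr (S \<omega> k) a b)) \<in> borel_measurable N" for a b
      using measurable_compose[OF Nc[of k a b] measurable_count_space, of real] by (simp add: comp_def)
    have "(\<lambda>\<omega>. real (ltime (S \<omega> k) j)) \<in> borel_measurable N" for j
      unfolding ltime_def of_nat_add by measurable
    then show ?thesis unfolding aa_def S_def[symmetric] by measurable
  qed
  have SA: "(\<lambda>\<omega>. (\<lambda>K \<omega>. \<Sum>k\<le>K. aa \<alpha> \<beta> (\<lambda>b k z. X (b,k,z) \<omega>) y k) (Kn (\<lambda>b k z. X (b,k,z) \<omega>) (ww \<alpha> \<beta>) y n) \<omega>) \<in> borel_measurable N"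
    by (rule measurable_compose_countable[OF _ K]) measurable
  have ZK: "(\<lambda>\<omega>. (\<lambda>K \<omega>. fw \<alpha> \<beta> False y n / ww \<alpha> \<beta> (Zar (S \<omega> K) (y-1))) (Kn (\<lambda>b k z. X (b,k,z) \<omega>) (ww \<alpha> \<beta>) y n) \<omega>) \<in> borel_measurable N"
  proof (rule measurable_compose_countable[OF _ K])
    fix K
    show "(\<lambda>\<omega>. fw \<alpha> \<beta> False y n / ww \<alpha> \<beta> (Zar (S \<omega> K) (y-1))) \<in> borel_measurable N"
      using measurable_compose[OF Z[of K "y-1"] measurable_count_space, of "\<lambda>z. fw \<alpha> \<beta> False y n / ww \<alpha> \<beta> z"]
      by (simp add: comp_def)
  qed
  have E[measurable]: "Measurable.pred N (\<lambda>\<omega>. \<exists>k. blk (\<lambda>b k z. X (b,k,z) \<omega>) (ww \<alpha> \<beta>) y n k)"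
    by measurable
  show ?thesis unfolding GG_def using SA ZK unfolding S_def by measurable
qed




lemma (in prob_space) exp_nn_integral:
  assumes D: "distributed M lborel X (\<lambda>x. ennreal (exponential_density (1 / f) x))" and f: "0 < f"
  shows "(\<integral>\<^sup>+\<omega>. ennreal (X \<omega>) \<partial>M) = ennreal f"
proof -
  have l: "0 < 1 / f" using f by simp
  have "integrable M X" using erlang_ith_moment_integrable[OF l D, of 1] by simp
  moreover have "AE x in M. 0 \<le> X x"
    by (subst distributed_AE2[OF D]) (auto simp: erlang_density_def)
  moreover have "expectation X = f" using exponential_distributed_expectation[OF l D] by simp
  ultimately show ?thesis by (simp add: nn_integral_eq_integral)
qed

theorem mainTheorem7:
  fixes M :: "'a measure" and \<xi> :: "bool \<times> nat \<times> int \<Rightarrow> 'a \<Rightarrow> real"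
    and \<alpha> \<beta> :: real and y :: int
  assumes "prob_space M"
    and "\<alpha> > 1/3" and "\<beta> > 0"
    and "prob_space.indep_vars M (\<lambda>_. borel) \<xi> UNIV"
    and "\<And>b k z. distributed M lborel (\<xi> (b, k, z))
            (\<lambda>x. ennreal (exponential_density (1 / fw \<alpha> \<beta> b z k) x))"
  shows "AE \<omega> in M.
           (\<Sum>k. ennreal (exp (2 * \<beta> * (real (ltime (jchain (\<lambda>b k z. \<xi> (b, k, z) \<omega>) (ww \<alpha> \<beta>) k) y)
               - \<alpha> * real (ltime (jchain (\<lambda>b k z. \<xi> (b, k, z) \<omega>) (ww \<alpha> \<beta>) k) (y - 1)))))) < \<infinity>
           \<longrightarrow> Tminus (\<lambda>b k z. \<xi> (b, k, z) \<omega>) (ww \<alpha> \<beta>) y < \<infinity>"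
proof -
  interpret prob_space M by (rule assms(1))
  have ind: "indep_vars (\<lambda>_. borel) \<xi> UNIV" using assms(4) by simp
  have xm[measurable]: "\<xi> i \<in> borel_measurable M" for i
  proof -
    obtain b k z where "i = (b, k, z)" by (cases i) auto
    then show ?thesis using distributed_measurable[OF assms(5)[of b k z]] by simp
  qed
  define Xi where "Xi \<omega> = (\<lambda>b k z. \<xi> (b, k, z) \<omega>)" for \<omega>
  define u where "u m n \<omega> = ennreal (\<xi> (False, n, y) \<omega>) *
      (ennreal (1 / fw \<alpha> \<beta> False y n) * ennreal (GG \<alpha> \<beta> (Xi \<omega>) y (real m) n))" for m :: nat and n \<omega>
  have Gm[measurable]: "(\<lambda>\<omega>. GG \<alpha> \<beta> (Xi \<omega>) y Mb n) \<in> borel_measurable M" for Mb n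
    unfolding Xi_def by (rule GG_meas) (rule xm)
  have um[measurable]: "u m n \<in> borel_measurable M" for m n
    unfolding u_def by measurable
  have E: "(\<integral>\<^sup>+\<omega>. u m n \<omega> \<partial>M) = (\<integral>\<^sup>+\<omega>. ennreal (GG \<alpha> \<beta> (Xi \<omega>) y (real m) n) \<partial>M)" for m n
  proof -
    define i0 where "i0 = (False, n, y)"
    define B where "B = UNIV - {(False, m', y) | m'. n \<le> m'}"
    define XB where "XB i x = (if i \<in> B then x i else 0)" for i and x :: "bool \<times> nat \<times> int \<Rightarrow> real"
    define h where "h x = GG \<alpha> \<beta> (\<lambda>b k z. XB (b, k, z) x) y (real m) n" for x
    have XBm: "XB i \<in> borel_measurable (PiM B (\<lambda>_. borel))" for i
    proof (cases "i \<in> B")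
      case True
      then have "XB i = (\<lambda>x. x i)" by (simp add: XB_def fun_eq_iff)
      then show ?thesis using measurable_component_singleton[OF True, of "\<lambda>_. borel"] by simp
    next
      case False
      then have "XB i = (\<lambda>x. 0)" by (simp add: XB_def fun_eq_iff)
      then show ?thesis by simp
    qed
    have hm: "h \<in> borel_measurable (PiM B (\<lambda>_. borel))"
      unfolding h_def by (rule GG_meas) (rule XBm)
    have "indep_var (PiM {i0} (\<lambda>_. borel)) (\<lambda>\<omega>. restrict (\<lambda>i. \<xi> i \<omega>) {i0})
                    (PiM B (\<lambda>_. borel)) (\<lambda>\<omega>. restrict (\<lambda>i. \<xi> i \<omega>) B)"
      by (rule indep_var_restrict[OF ind]) (auto simp: i0_def B_def)
    then have iv: "indep_var borel ((\<lambda>x. ennreal (x i0)) \<circ> (\<lambda>\<omega>. restrict (\<lambda>i. \<xi> i \<omega>) {i0}))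
                    borel ((\<lambda>x. ennreal (h x)) \<circ> (\<lambda>\<omega>. restrict (\<lambda>i. \<xi> i \<omega>) B))"
      by (rule indep_var_compose) (use hm in measurable)
    have c1: "((\<lambda>x. ennreal (x i0)) \<circ> (\<lambda>\<omega>. restrict (\<lambda>i. \<xi> i \<omega>) {i0})) = (\<lambda>\<omega>. ennreal (\<xi> i0 \<omega>))"
      by (simp add: comp_def)
    have c2: "((\<lambda>x. ennreal (h x)) \<circ> (\<lambda>\<omega>. restrict (\<lambda>i. \<xi> i \<omega>) B)) = (\<lambda>\<omega>. ennreal (GG \<alpha> \<beta> (Xi \<omega>) y (real m) n))"
    proof
      fix \<omega>
      have "GG \<alpha> \<beta> (\<lambda>b k z. XB (b, k, z) (restrict (\<lambda>i. \<xi> i \<omega>) B)) y (real m) n = GG \<alpha> \<beta> (Xi \<omega>) y (real m) n"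
        by (rule GG_agree) (auto simp: XB_def B_def Xi_def)
      then show "((\<lambda>x. ennreal (h x)) \<circ> (\<lambda>\<omega>. restrict (\<lambda>i. \<xi> i \<omega>) B)) \<omega> = ennreal (GG \<alpha> \<beta> (Xi \<omega>) y (real m) n)"
        by (simp add: h_def)
    qed
    have iv2: "indep_vars (\<lambda>_. borel) (case_bool (\<lambda>\<omega>. ennreal (\<xi> i0 \<omega>)) (\<lambda>\<omega>. ennreal (GG \<alpha> \<beta> (Xi \<omega>) y (real m) n))) UNIV"
    proof -
      have **: "(\<lambda> _. borel) = case_bool borel borel"
        by (rule ext, metis (full_types) bool.simps(3) bool.simps(4))
      show ?thesis using iv unfolding c1 c2 indep_var_def ** .
    qed
    have "(\<integral>\<^sup>+\<omega>. (\<Prod>b\<in>UNIV. case_bool (\<lambda>\<omega>. ennreal (\<xi> i0 \<omega>)) (\<lambda>\<omega>. ennreal (GG \<alpha> \<beta> (Xi \<omega>) y (real m) n)) b \<omega>) \<partial>M)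
       = (\<Prod>b\<in>UNIV. \<integral>\<^sup>+\<omega>. case_bool (\<lambda>\<omega>. ennreal (\<xi> i0 \<omega>)) (\<lambda>\<omega>. ennreal (GG \<alpha> \<beta> (Xi \<omega>) y (real m) n)) b \<omega> \<partial>M)"
      by (rule indep_vars_nn_integral[OF _ iv2]) auto
    then have prod: "(\<integral>\<^sup>+\<omega>. ennreal (\<xi> i0 \<omega>) * ennreal (GG \<alpha> \<beta> (Xi \<omega>) y (real m) n) \<partial>M)
       = (\<integral>\<^sup>+\<omega>. ennreal (\<xi> i0 \<omega>) \<partial>M) * (\<integral>\<^sup>+\<omega>. ennreal (GG \<alpha> \<beta> (Xi \<omega>) y (real m) n) \<partial>M)"
      by (simp add: UNIV_bool mult.commute)
    have e1: "(\<integral>\<^sup>+\<omega>. ennreal (\<xi> i0 \<omega>) \<partial>M) = ennreal (fw \<alpha> \<beta> False y n)"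
      unfolding i0_def by (rule exp_nn_integral[OF assms(5)]) (rule fw_pos)
    have "(\<integral>\<^sup>+\<omega>. u m n \<omega> \<partial>M) = (\<integral>\<^sup>+\<omega>. ennreal (1 / fw \<alpha> \<beta> False y n) * (ennreal (\<xi> i0 \<omega>) * ennreal (GG \<alpha> \<beta> (Xi \<omega>) y (real m) n)) \<partial>M)"
      unfolding u_def i0_def by (simp add: ac_simps)
    also have "\<dots> = ennreal (1 / fw \<alpha> \<beta> False y n) * (\<integral>\<^sup>+\<omega>. ennreal (\<xi> i0 \<omega>) * ennreal (GG \<alpha> \<beta> (Xi \<omega>) y (real m) n) \<partial>M)"
      by (rule nn_integral_cmult) (simp add: i0_def)
    also have "\<dots> = (ennreal (1 / fw \<alpha> \<beta> False y n) * ennreal (fw \<alpha> \<beta> False y n)) * (\<integral>\<^sup>+\<omega>. ennreal (GG \<alpha> \<beta> (Xi \<omega>) y (real m) n) \<partial>M)"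
      unfolding prod e1 by (simp add: ac_simps)
    also have "ennreal (1 / fw \<alpha> \<beta> False y n) * ennreal (fw \<alpha> \<beta> False y n) = 1"
      using fw_pos[of \<alpha> \<beta> False y n] by (simp add: ennreal_mult[symmetric] del: ennreal_mult)
    finally show ?thesis by simp
  qed
  have key: "AE \<omega> in M. (\<Sum>n. u m n \<omega>) \<noteq> \<infinity>" for m :: nat
  proof (rule nn_integral_PInf_AE)
    show "(\<lambda>\<omega>. \<Sum>n. u m n \<omega>) \<in> borel_measurable M" by measurable
    have "(\<integral>\<^sup>+\<omega>. (\<Sum>n. u m n \<omega>) \<partial>M) = (\<Sum>n. \<integral>\<^sup>+\<omega>. u m n \<omega> \<partial>M)"
      by (rule nn_integral_suminf) simp
    also have "\<dots> = (\<Sum>n. \<integral>\<^sup>+\<omega>. ennreal (GG \<alpha> \<beta> (Xi \<omega>) y (real m) n) \<partial>M)" using E by simp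
    also have "\<dots> = (\<integral>\<^sup>+\<omega>. (\<Sum>n. ennreal (GG \<alpha> \<beta> (Xi \<omega>) y (real m) n)) \<partial>M)"
      by (rule nn_integral_suminf[symmetric]) simp
    also have "\<dots> \<le> (\<integral>\<^sup>+\<omega>. ennreal (real m) \<partial>M)"
      by (rule nn_integral_mono) (rule GG_sum_le)
    also have "\<dots> = ennreal (real m)" by (simp add: emeasure_space_1)
    finally show "(\<integral>\<^sup>+\<omega>. (\<Sum>n. u m n \<omega>) \<partial>M) \<noteq> \<infinity>"
      unfolding infinity_ennreal_def by (rule neq_top_trans[OF ennreal_neq_top])
  qed
  then have "AE \<omega> in M. \<forall>m::nat. (\<Sum>n. u m n \<omega>) \<noteq> \<infinity>" by (simp add: AE_all_countable)
  then show ?thesis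
  proof (rule eventually_mono, intro impI)
    fix \<omega> assume H: "\<forall>m::nat. (\<Sum>n. u m n \<omega>) \<noteq> \<infinity>"
    assume A: "(\<Sum>k. ennreal (exp (2 * \<beta> * (real (ltime (jchain (\<lambda>b k z. \<xi> (b, k, z) \<omega>) (ww \<alpha> \<beta>) k) y)
               - \<alpha> * real (ltime (jchain (\<lambda>b k z. \<xi> (b, k, z) \<omega>) (ww \<alpha> \<beta>) k) (y - 1)))))) < \<infinity>"
    then have A': "(\<Sum>k. ennreal (aa \<alpha> \<beta> (Xi \<omega>) y k)) < \<infinity>" by (simp add: aa_def Xi_def)
    then obtain r where r: "(\<Sum>k. ennreal (aa \<alpha> \<beta> (Xi \<omega>) y k)) = ennreal r" "0 \<le> r"
      using less_top ennreal_cases by (metis top.extremum_strict)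
    define m where "m = nat \<lceil>r\<rceil>"
    have "r \<le> real m" unfolding m_def by linarith
    then have le: "(\<Sum>k. ennreal (aa \<alpha> \<beta> (Xi \<omega>) y k)) \<le> ennreal (real m)" using r by (simp add: ennreal_leI)
    have "Tminus (Xi \<omega>) (ww \<alpha> \<beta>) y \<le> (\<Sum>n. u m n \<omega>)"
      unfolding u_def using Tminus_le[OF le] by (simp add: Xi_def)
    also have "\<dots> < \<infinity>" using H by (simp add: top.not_eq_extremum)
    finally show "Tminus (\<lambda>b k z. \<xi> (b, k, z) \<omega>) (ww \<alpha> \<beta>) y < \<infinity>" by (simp add: Xi_def)
  qed
qed


end
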